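(* Let $\beta\in\mathbb{F}_{p^m}\setminus\{0\}$. The $(\alpha+\beta u)$-constacyclic codes of length $4p^s$ over $R$, i.e. the ideals of $\mathcal{R}_{\alpha,\beta}=R[x]/\langle x^{4p^s}-(\alpha+\beta u)\rangle$, are exactly the principal ideals $$\left\langle\left(x^2+\gamma x+\tfrac{\gamma^2}{2}\right)^i\left(x^2-\gamma x+\tfrac{\gamma^2}{2}\right)^j\right\rangle,\qquad 0\le i,j\le 2p^s.$$
   Context: Let $p$ be an odd prime and $m,s$ positive integers with $p^m\equiv 3\pmod 4$; $\mathbb{F}_{p^m}$ is the field with $p^m$ elements and $R=\mathbb{F}_{p^m}[u]/\langle u^2\rangle$. Fix $\alpha\in\mathbb{F}_{p^m}\setminus\{0\}$ that is not a square in $\mathbb{F}_{p^m}$, let $\alpha_0\in\mathbb{F}_{p^m}$ satisfy $\alpha_0^{p^s}=\alpha$, and let $\gamma\in\mathbb{F}_{p^m}$ satisfy $\gamma^4+4\alpha_0=0$. For a unit $\lambda\in R$, a $\lambda$-constacyclic code of length $n$ over $R$ is an $R$-submodule $\mathcal{C}\subseteq R^n$ closed under $(c_0,\dots,c_{n-1})\mapsto(\lambda c_{n-1},c_0,\dots,c_{n-2})$; via $(c_0,\dots,c_{n-1})\mapsto\sum c_ix^i$ these are identified with the ideals of $R[x]/\langle x^n-\lambda\rangle$. *)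

theory Defs
  imports "HOL-Computational_Algebra.Polynomial"
begin

text \<open>An element D a b represents a + b u with u^2 = 0.\<close>

datatype 'a dnum = D (re: 'a) (du: 'a)

instantiation dnum :: (comm_ring_1) comm_ring_1
begin
definition "0 = D 0 0"
definition "1 = D 1 0"
definition "x + y = D (re x + re y) (du x + du y)"
definition "x - y = D (re x - re y) (du x - du y)"
definition "- x = D (- re x) (- du x)"
definition "x * y = D (re x * re y) (re x * du y + du x * re y)"
instance
  by standard
     (auto simp: zero_dnum_def one_dnum_def plus_dnum_def minus_dnum_def
        uminus_dnum_def times_dnum_def algebra_simps intro: dnum.expand)
end

definition cshift :: "'r::comm_ring_1 \<Rightarrow> 'r list \<Rightarrow> 'r list" where
  "cshift lam c = (lam * last c) # butlast c"

definition constacyclic_code :: "nat \<Rightarrow> 'r::comm_ring_1 \<Rightarrow> 'r list set \<Rightarrow> bool" where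
  "constacyclic_code n lam C \<longleftrightarrow>
     C \<subseteq> {c. length c = n} \<and>
     replicate n 0 \<in> C \<and>
     (\<forall>c\<in>C. \<forall>d\<in>C. map2 (+) c d \<in> C) \<and>
     (\<forall>r. \<forall>c\<in>C. map ((*) r) c \<in> C) \<and>
     (\<forall>c\<in>C. cshift lam c \<in> C)"

text \<open>Coefficient vector (length n) of the residue of f modulo x^n - lam,
  i.e. the canonical representative of f in R[x]/<x^n - lam>
  (using x^n = lam).\<close>

definition reduce_vec :: "nat \<Rightarrow> 'r::comm_ring_1 \<Rightarrow> 'r poly \<Rightarrow> 'r list" where
  "reduce_vec n lam f =
     map (\<lambda>i. \<Sum>k\<le>degree f. if k mod n = i then coeff f k * lam ^ (k div n) else 0)
         [0..<n]"

definition principal_code :: "nat \<Rightarrow> 'r::comm_ring_1 \<Rightarrow> 'r poly \<Rightarrow> 'r list set" where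
  "principal_code n lam g = {reduce_vec n lam (a * g) | a. True}"

abbreviation emb :: "'a::comm_ring_1 \<Rightarrow> 'a dnum" where
  "emb a \<equiv> D a 0"

end

theory Submission
  imports Defs "HOL-Computational_Algebra.Computational_Algebra" "HOL-Number_Theory.Residues"
begin

hide_const (open) UnivPoly.coeff UnivPoly.monom Module.module.smult

lemma dn_simps [simp]:
  "re (0::'a::comm_ring_1 dnum) = 0" "du (0::'a dnum) = 0"
  "re (1::'a::comm_ring_1 dnum) = 1" "du (1::'a dnum) = 0"
  "re (x + y) = re x + re y" "du (x + y) = du x + du y"
  "re (x - y) = re x - re y" "du (x - y) = du x - du y"
  "re (- x) = - re x" "du (- x) = - du x"
  "re (x * y) = re x * re y" "du (x * y) = re x * du y + du x * re y"
  by (simp_all add: zero_dnum_def one_dnum_def plus_dnum_def minus_dnum_def uminus_dnum_def times_dnum_def)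

lemma re_sum: "re (sum f A) = (\<Sum>x\<in>A. re (f x))"
  by (induction A rule: infinite_finite_induct) auto
lemma du_sum: "du (sum f A) = (\<Sum>x\<in>A. du (f x))"
  by (induction A rule: infinite_finite_induct) auto

lemma coeff_map_re [simp]: "coeff (map_poly re f) i = re (coeff f i)"
  by (simp add: coeff_map_poly)
lemma coeff_map_du [simp]: "coeff (map_poly du f) i = du (coeff f i)"
  by (simp add: coeff_map_poly)

lemma map_re_add: "map_poly re (f + g) = map_poly re f + map_poly re g"
  by (rule poly_eqI) simp
lemma map_du_add: "map_poly du (f + g) = map_poly du f + map_poly du g"
  by (rule poly_eqI) simp
lemma map_re_diff: "map_poly re (f - g) = map_poly re f - map_poly re g"
  by (rule poly_eqI) simp
lemma map_du_diff: "map_poly du (f - g) = map_poly du f - map_poly du g"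
  by (rule poly_eqI) simp
lemma map_re_mult: "map_poly re (f * g) = map_poly re f * map_poly re g"
  by (rule poly_eqI) (simp add: coeff_mult re_sum)
lemma map_du_mult: "map_poly du (f * g) = map_poly re f * map_poly du g + map_poly du f * map_poly re g"
  by (rule poly_eqI) (simp add: coeff_mult du_sum sum.distrib)

lemma map_re_monom [simp]: "map_poly re (monom c k) = monom (re c) k"
  by (rule poly_eqI) (simp add: coeff_monom)
lemma map_du_monom [simp]: "map_poly du (monom c k) = monom (du c) k"
  by (rule poly_eqI) (simp add: coeff_monom)
lemma map_re_const [simp]: "map_poly re [:c:] = [:re c:]"
  by (rule poly_eqI) (simp add: coeff_pCons split: nat.split)
lemma map_du_const [simp]: "map_poly du [:c:] = [:du c:]"
  by (rule poly_eqI) (simp add: coeff_pCons split: nat.split)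

lemma dvd_pow_diff: "(x::'a::comm_ring_1) - y dvd x ^ q - y ^ q"
proof (induction q)
  case (Suc q)
  have "x ^ Suc q - y ^ Suc q = x * (x ^ q - y ^ q) + (x - y) * y ^ q"
    by (simp add: algebra_simps)
  then show ?case using Suc by (simp add: dvd_add dvd_mult)
qed simp

lemma const_pow: "[:c::'a::comm_ring_1:] ^ k = [:c ^ k:]"
  by (induction k) auto

lemma monom_times_const: "monom (c::'a::comm_ring_1) r * [:d:] = monom (c * d) r"
  by (rule poly_eqI) (simp add: coeff_monom)

lemma Poly_map_upt: "Poly (map g [0..<n]) = (\<Sum>i<n. monom (g i) i)"
  by (rule poly_eqI) (simp add: coeff_sum nth_default_def coeff_monom)

lemma reduce_vec_dvd:
  fixes f :: "'r::comm_ring_1 poly"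
  assumes "n > 0"
  shows "(monom 1 n - [:lam:]) dvd (f - Poly (reduce_vec n lam f))"
proof -
  define a where "a k = coeff f k * lam ^ (k div n)" for k
  have "Poly (reduce_vec n lam f) = (\<Sum>i<n. monom (\<Sum>k\<le>degree f. if k mod n = i then a k else 0) i)"
    unfolding reduce_vec_def Poly_map_upt a_def ..
  also have "\<dots> = (\<Sum>i<n. \<Sum>k\<le>degree f. if k mod n = i then monom (a k) i else 0)"
    by (simp add: monom_sum if_distrib[where f="\<lambda>c. monom c _"] cong: if_cong)
  also have "\<dots> = (\<Sum>k\<le>degree f. \<Sum>i<n. if k mod n = i then monom (a k) i else 0)"
    by (rule sum.swap)
  also have "\<dots> = (\<Sum>k\<le>degree f. monom (a k) (k mod n))"
    using assms by (simp add: sum.delta)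
  finally have P: "Poly (reduce_vec n lam f) = (\<Sum>k\<le>degree f. monom (a k) (k mod n))" .
  have "f - Poly (reduce_vec n lam f) = (\<Sum>k\<le>degree f. monom (coeff f k) k - monom (a k) (k mod n))"
    by (simp add: P sum_subtractf poly_as_sum_of_monoms)
  also have "(monom 1 n - [:lam:]) dvd \<dots>"
  proof (rule dvd_sum)
    fix k
    have k: "k = k mod n + n * (k div n)" by simp
    have "monom (coeff f k) k - monom (a k) (k mod n) =
          monom (coeff f k) (k mod n) * ((monom 1 n) ^ (k div n) - [:lam:] ^ (k div n))"
      apply (subst (1) k)
      by (simp add: a_def monom_power right_diff_distrib mult_monom const_pow monom_times_const smult_monom mult.commute)
    moreover have "(monom 1 n - [:lam:]) dvd ((monom 1 n) ^ (k div n) - [:lam:] ^ (k div n))"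
      by (rule dvd_pow_diff)
    ultimately show "(monom 1 n - [:lam:]) dvd monom (coeff f k) k - monom (a k) (k mod n)"
      by (simp add: dvd_mult)
  qed
  finally show ?thesis .
qed

lemma degree_Poly_less: "n > 0 \<Longrightarrow> length xs = n \<Longrightarrow> degree (Poly xs) < n"
proof -
  assume a: "n > 0" "length xs = n"
  have "degree (Poly xs) \<le> n - 1"
    by (rule degree_le) (use a in \<open>auto simp: nth_default_def\<close>)
  with a show ?thesis by simp
qed

lemma degree_map_less: "degree p < n \<Longrightarrow> degree (map_poly f p) < n"
  using map_poly_degree_leq le_less_trans by blast

lemma Poly_map2_add: "length c = length d \<Longrightarrow> Poly (map2 (+) c d) = Poly c + Poly d"
  by (induction c d rule: list_induct2) auto

locale cc =
  fixes n :: nat and \<alpha> \<beta> :: "'a::field"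
  assumes n_pos: "n > 0" and beta: "\<beta> \<noteq> 0"
begin

definition e :: "'a poly" where "e = monom 1 n - [:\<alpha>:]"
definition h :: "'a poly" where "h = e ^ 2"
definition psi :: "'a dnum poly \<Rightarrow> 'a poly" where
  "psi f = map_poly re f + smult (inverse \<beta>) (e * map_poly du f)"
definition Phi :: "'a dnum list \<Rightarrow> 'a poly" where "Phi c = psi (Poly c)"
definition Code :: "'a poly \<Rightarrow> 'a dnum list set" where
  "Code d = {c. length c = n \<and> d dvd Phi c}"

lemma degree_e: "degree e = n"
  unfolding e_def using n_pos by (simp only: diff_conv_add_uminus, subst degree_add_eq_left) (simp_all add: degree_monom_eq)
lemma e_nz: "e \<noteq> 0"
  using degree_e n_pos by auto
lemma degree_h: "degree h = 2 * n"
  unfolding h_def by (simp add: degree_power_eq e_nz degree_e)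

lemma psi_add: "psi (f + g) = psi f + psi g"
  by (simp add: psi_def map_re_add map_du_add algebra_simps smult_add_right)
lemma psi_diff: "psi (f - g) = psi f - psi g"
  by (simp add: psi_def map_re_diff map_du_diff algebra_simps smult_diff_right)
lemma psi_zero [simp]: "psi 0 = 0"
  by (simp add: psi_def)

lemma psi_mult: "psi (f * g) = psi f * psi g - smult (inverse \<beta> ^ 2) (h * (map_poly du f * map_poly du g))"
  by (simp add: psi_def map_re_mult map_du_mult h_def power2_eq_square algebra_simps smult_add_right smult_diff_right)

lemma psi_mult_cong: "h dvd psi (f * g) - psi f * psi g"
  by (simp add: psi_mult dvd_smult)

lemma psi_q: "psi (monom 1 n - [:D \<alpha> \<beta>:]) = 0"
  using beta by (simp add: psi_def map_re_diff map_du_diff e_def)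

lemma psi_emb: "psi (map_poly emb f) = f"
proof -
  have "map_poly re (map_poly emb f) = f"
    by (rule poly_eqI) (simp add: coeff_map_poly zero_dnum_def)
  moreover have "map_poly du (map_poly emb f) = 0"
    by (rule poly_eqI) (simp add: coeff_map_poly zero_dnum_def)
  ultimately show ?thesis by (simp add: psi_def)
qed

lemma psi_reduce: "h dvd psi f - Phi (reduce_vec n (D \<alpha> \<beta>) f)"
proof -
  obtain t where t: "f - Poly (reduce_vec n (D \<alpha> \<beta>) f) = (monom 1 n - [:D \<alpha> \<beta>:]) * t"
    using reduce_vec_dvd[OF n_pos] by (metis dvdE)
  have "psi f - Phi (reduce_vec n (D \<alpha> \<beta>) f) = psi ((monom 1 n - [:D \<alpha> \<beta>:]) * t)"
    by (simp add: Phi_def flip: psi_diff t)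
  then show ?thesis using psi_mult_cong[of "monom 1 n - [:D \<alpha> \<beta>:]" t] by (simp add: psi_q)
qed


lemma Phi_rep: "Phi c = map_poly re (Poly c) + smult (inverse \<beta>) (e * map_poly du (Poly c))"
  by (simp add: Phi_def psi_def)

lemma Phi_degree: "length c = n \<Longrightarrow> degree (Phi c) < 2 * n"
proof -
  assume l: "length c = n"
  have dP: "degree (Poly c) < n" using degree_Poly_less[OF n_pos l] .
  have A: "degree (map_poly re (Poly c)) < 2 * n" using degree_map_less[OF dP, of re] by simp
  have "degree (e * map_poly du (Poly c)) \<le> degree e + degree (map_poly du (Poly c))"
    by (rule degree_mult_le)
  also have "\<dots> < 2 * n" using degree_map_less[OF dP, of du] degree_e by simp
  finally have B: "degree (smult (inverse \<beta>) (e * map_poly du (Poly c))) < 2 * n"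
    using degree_smult_le le_less_trans by blast
  show ?thesis unfolding Phi_rep using A B by (simp add: degree_add_less)
qed

lemma Phi_inj:
  assumes l: "length c = n" "length c' = n" and dv: "h dvd Phi c - Phi c'"
  shows "c = c'"
proof -
  define A where "A = map_poly re (Poly c) - map_poly re (Poly c')"
  define B where "B = map_poly du (Poly c) - map_poly du (Poly c')"
  have eq: "Phi c - Phi c' = A + smult (inverse \<beta>) (e * B)"
    by (simp add: Phi_rep A_def B_def algebra_simps smult_diff_right)
  have dg: "degree (Phi c - Phi c') < 2 * n"
    using Phi_degree[OF l(1)] Phi_degree[OF l(2)] by (simp add: degree_diff_less)
  have "Phi c - Phi c' = 0"
  proof (rule ccontr)
    assume ne: "Phi c - Phi c' \<noteq> 0"
    have "degree h \<le> degree (Phi c - Phi c')" by (rule dvd_imp_degree_le[OF dv ne])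
    with dg show False by (simp add: degree_h)
  qed
  hence A: "A = - smult (inverse \<beta>) (e * B)" using eq by (simp add: eq_neg_iff_add_eq_0)
  have dA: "degree A < n" unfolding A_def
    using degree_map_less[OF degree_Poly_less[OF n_pos l(1)], of re]
      degree_map_less[OF degree_Poly_less[OF n_pos l(2)], of re] by (simp add: degree_diff_less)
  have B0: "B = 0"
  proof (rule ccontr)
    assume "B \<noteq> 0"
    hence "degree (- smult (inverse \<beta>) (e * B)) = n + degree B"
      using beta e_nz by (simp add: degree_mult_eq degree_e)
    with A dA show False by simp
  qed
  with A have A0: "A = 0" by simp
  show ?thesis
  proof (rule nth_equalityI)
    show "length c = length c'" using l by simp
    fix i assume "i < length c"
    hence i: "i < length c" "i < length c'" using l by auto
    have "coeff A i = 0" "coeff B i = 0" using A0 B0 by auto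
    hence "re (c ! i) = re (c' ! i)" "du (c ! i) = du (c' ! i)"
      using i by (auto simp: A_def B_def coeff_Poly_eq nth_default_def)
    thus "c ! i = c' ! i" by (intro dnum.expand) auto
  qed
qed

lemma Phi_zero: "Phi (replicate n 0) = 0"
  by (simp add: Phi_def)

lemma Phi_add: "length c = length d \<Longrightarrow> Phi (map2 (+) c d) = Phi c + Phi d"
  by (simp add: Phi_def Poly_map2_add psi_add)

lemma Phi_scal: "h dvd Phi (map ((*) r) c) - psi [:r:] * Phi c"
proof -
  have "Poly (map ((*) r) c) = [:r:] * Poly c" by (simp add: Poly_map)
  thus ?thesis using psi_mult_cong[of "[:r:]" "Poly c"] by (simp add: Phi_def)
qed

lemma psi_X: "psi (monom 1 1) = monom 1 1"
  by (simp add: psi_def)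

lemma pCons0_X: "pCons 0 (q::'b::comm_ring_1 poly) = monom 1 1 * q"
  by (rule poly_eqI) (simp add: coeff_pCons coeff_monom_mult split: nat.split)

lemma Poly_cshift:
  assumes "length c = n"
  shows "Poly (cshift lam c) = monom 1 1 * Poly c - [:last c:] * (monom 1 n - [:lam:])"
proof -
  have ne: "c \<noteq> []" using assms n_pos by auto
  define b where "b = butlast c"
  define l where "l = last c"
  have c: "c = b @ [l]" using ne by (simp add: b_def l_def)
  have lb: "length b = n - 1" using assms by (simp add: b_def)
  have "Poly (cshift lam c) = pCons (lam * l) (Poly b)"
    by (simp add: cshift_def b_def l_def)
  also have "\<dots> = [:lam * l:] + monom 1 1 * Poly b"
    unfolding pCons0_X[symmetric] by simp
  finally have 1: "Poly (cshift lam c) = [:lam * l:] + monom 1 1 * Poly b" .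
  have 2: "Poly c = Poly b + monom l (n - 1)"
    by (simp add: c Poly_snoc lb)
  have 3: "monom 1 1 * monom l (n - 1) = monom l n"
    using n_pos by (simp add: mult_monom)
  show ?thesis
  proof -
    have 4: "[:last c:] * monom 1 n = monom l n" by (simp add: l_def smult_monom)
    have "monom 1 1 * Poly c - [:last c:] * (monom 1 n - [:lam:])
        = monom 1 1 * Poly b + monom 1 1 * monom l (n - 1) - [:last c:] * monom 1 n + [:last c:] * [:lam:]"
      by (simp add: 2 algebra_simps)
    also have "\<dots> = [:lam * l:] + monom 1 1 * Poly b"
      by (simp only: 3 4) (simp add: l_def mult.commute)
    finally show ?thesis unfolding 1 by simp
  qed
qed

lemma Phi_shift:
  assumes "length c = n"
  shows "h dvd Phi (cshift (D \<alpha> \<beta>) c) - monom 1 1 * Phi c"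
proof -
  have eq: "Phi (cshift (D \<alpha> \<beta>) c) = psi (monom 1 1 * Poly c) - psi ([:last c:] * (monom 1 n - [:D \<alpha> \<beta>:]))"
    by (simp add: Phi_def Poly_cshift[OF assms] psi_diff)
  have 1: "h dvd psi (monom 1 1 * Poly c) - monom 1 1 * Phi c"
    using psi_mult_cong[of "monom 1 1" "Poly c"] unfolding psi_X Phi_def .
  have 2: "h dvd psi ([:last c:] * (monom 1 n - [:D \<alpha> \<beta>:]))"
    using psi_mult_cong[of "[:last c:]" "monom 1 n - [:D \<alpha> \<beta>:]"] by (simp add: psi_q)
  have "Phi (cshift (D \<alpha> \<beta>) c) - monom 1 1 * Phi c =
        (psi (monom 1 1 * Poly c) - monom 1 1 * Phi c) - psi ([:last c:] * (monom 1 n - [:D \<alpha> \<beta>:]))"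
    unfolding eq by (simp add: algebra_simps)
  then show ?thesis using dvd_diff[OF 1 2] by (simp only:)
qed


lemma dvd_via_h: "d dvd h \<Longrightarrow> h dvd a - b \<Longrightarrow> d dvd b \<Longrightarrow> d dvd a"
  by (metis diff_add_cancel dvd_add dvd_trans)

lemma Code_code:
  assumes dh: "d dvd h"
  shows "constacyclic_code n (D \<alpha> \<beta>) (Code d)"
  unfolding constacyclic_code_def
proof (intro conjI ballI allI)
  show "Code d \<subseteq> {c. length c = n}" by (auto simp: Code_def)
  show "replicate n 0 \<in> Code d" by (simp add: Code_def Phi_zero)
  fix c assume c: "c \<in> Code d"
  then have lc: "length c = n" and dc: "d dvd Phi c" by (auto simp: Code_def)
  { fix c' assume "c' \<in> Code d"
    then have lc': "length c' = n" and dc': "d dvd Phi c'" by (auto simp: Code_def)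
    show "map2 (+) c c' \<in> Code d"
      using lc lc' dc dc' by (simp add: Code_def Phi_add) }
  { fix r
    show "map ((*) r) c \<in> Code d"
      using lc dvd_via_h[OF dh Phi_scal[of r c]] dc by (simp add: Code_def) }
  show "cshift (D \<alpha> \<beta>) c \<in> Code d"
    using lc dvd_via_h[OF dh Phi_shift[OF lc]] dc n_pos
    by (simp add: Code_def cshift_def)
qed

end


context cc begin

lemma principal_Code:
  assumes dh: "d dvd h"
  shows "principal_code n (D \<alpha> \<beta>) (map_poly emb d) = Code d"
proof
  show "principal_code n (D \<alpha> \<beta>) (map_poly emb d) \<subseteq> Code d"
  proof
    fix c assume "c \<in> principal_code n (D \<alpha> \<beta>) (map_poly emb d)"
    then obtain a where c: "c = reduce_vec n (D \<alpha> \<beta>) (a * map_poly emb d)"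
      by (auto simp: principal_code_def)
    have 1: "h dvd psi (a * map_poly emb d) - Phi c" using psi_reduce c by simp
    have 2: "h dvd psi (a * map_poly emb d) - psi a * d"
      using psi_mult_cong[of a "map_poly emb d"] by (simp add: psi_emb)
    have "d dvd psi (a * map_poly emb d)" using dvd_via_h[OF dh 2] by simp
    moreover have "d dvd psi (a * map_poly emb d) - Phi c" using 1 dh dvd_trans by blast
    ultimately have "d dvd psi (a * map_poly emb d) - (psi (a * map_poly emb d) - Phi c)"
      by (rule dvd_diff)
    hence "d dvd Phi c" by simp
    moreover have "length c = n" by (simp add: c reduce_vec_def)
    ultimately show "c \<in> Code d" by (simp add: Code_def)
  qed
  show "Code d \<subseteq> principal_code n (D \<alpha> \<beta>) (map_poly emb d)"
  proof
    fix c assume "c \<in> Code d"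
    then have lc: "length c = n" and "d dvd Phi c" by (auto simp: Code_def)
    then obtain b where b: "Phi c = d * b" by (auto elim: dvdE)
    define c' where "c' = reduce_vec n (D \<alpha> \<beta>) (map_poly emb b * map_poly emb d)"
    have 1: "h dvd psi (map_poly emb b * map_poly emb d) - Phi c'" using psi_reduce c'_def by simp
    have 2: "h dvd psi (map_poly emb b * map_poly emb d) - Phi c"
      using psi_mult_cong[of "map_poly emb b" "map_poly emb d"] by (simp add: psi_emb b mult.commute)
    have "h dvd Phi c' - Phi c" using dvd_diff[OF 2 1] by simp
    moreover have "length c' = n" by (simp add: c'_def reduce_vec_def)
    ultimately have "c' = c" using Phi_inj lc by blast
    thus "c \<in> principal_code n (D \<alpha> \<beta>) (map_poly emb d)"
      unfolding principal_code_def c'_def by blast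
  qed
qed


end


context cc begin

lemma code_is_Code:
  assumes C: "constacyclic_code n (D \<alpha> \<beta>) C"
  shows "\<exists>d. lead_coeff d = 1 \<and> d dvd h \<and> C = Code d"
proof -
  from C have Cl: "\<And>c. c \<in> C \<Longrightarrow> length c = n"
    and C0: "replicate n 0 \<in> C"
    and Cadd: "\<And>c d. c \<in> C \<Longrightarrow> d \<in> C \<Longrightarrow> map2 (+) c d \<in> C"
    and Cmul: "\<And>r c. c \<in> C \<Longrightarrow> map ((*) r) c \<in> C"
    and Csh: "\<And>c. c \<in> C \<Longrightarrow> cshift (D \<alpha> \<beta>) c \<in> C"
    unfolding constacyclic_code_def by auto
  define J where "J = {f. \<exists>c\<in>C. h dvd f - Phi c}"
  have J0: "0 \<in> J" unfolding J_def using C0 Phi_zero by force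
  have Jh: "h \<in> J" unfolding J_def using C0 Phi_zero by force
  have Jadd: "f + g \<in> J" if fJ: "f \<in> J" and gJ: "g \<in> J" for f g
  proof -
    obtain c where c: "c \<in> C" "h dvd f - Phi c" using fJ unfolding J_def by blast
    obtain d where d: "d \<in> C" "h dvd g - Phi d" using gJ unfolding J_def by blast
    have "map2 (+) c d \<in> C" using Cadd c d by auto
    moreover have "Phi (map2 (+) c d) = Phi c + Phi d" using Phi_add Cl c d by simp
    moreover have "h dvd (f + g) - (Phi c + Phi d)"
      using dvd_add[OF c(2) d(2)] by (simp add: algebra_simps)
    ultimately show ?thesis unfolding J_def by (metis (mono_tags, lifting) mem_Collect_eq)
  qed
  have Jsm: "smult a f \<in> J" if fJ: "f \<in> J" for a f
  proof -
    obtain c where c: "c \<in> C" "h dvd f - Phi c" using fJ unfolding J_def by auto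
    have me: "map_poly emb [:a:] = [:emb a:]"
      by (rule poly_eqI) (simp add: coeff_map_poly coeff_pCons zero_dnum_def split: nat.split)
    have pe: "psi [:emb a:] = [:a:]" using psi_emb[of "[:a:]"] me by simp
    have 1: "h dvd Phi (map ((*) (emb a)) c) - smult a (Phi c)"
      using Phi_scal[of "emb a" c] unfolding pe by simp
    have 2: "h dvd smult a f - smult a (Phi c)"
      using dvd_smult[OF c(2), of a] by (simp add: smult_diff_right)
    have "h dvd smult a f - Phi (map ((*) (emb a)) c)" using dvd_diff[OF 2 1] by simp
    thus ?thesis unfolding J_def using Cmul[OF c(1)] by blast
  qed
  have JX: "monom 1 1 * f \<in> J" if fJ: "f \<in> J" for f
  proof -
    obtain c where c: "c \<in> C" "h dvd f - Phi c" using fJ unfolding J_def by auto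
    have 1: "h dvd Phi (cshift (D \<alpha> \<beta>) c) - monom 1 1 * Phi c" using Phi_shift Cl c by blast
    have 2: "h dvd monom 1 1 * f - monom 1 1 * Phi c"
      using dvd_mult[OF c(2), of "monom 1 1"] by (simp add: right_diff_distrib)
    have "h dvd monom 1 1 * f - Phi (cshift (D \<alpha> \<beta>) c)" using dvd_diff[OF 2 1] by simp
    thus ?thesis unfolding J_def using Csh[OF c(1)] by blast
  qed
  have Jmul: "g * f \<in> J" if "f \<in> J" for f g
  proof (induction g rule: pCons_induct)
    case 0 then show ?case using J0 by simp
  next
    case (pCons a p)
    have "pCons a p * f = smult a f + monom 1 1 * (p * f)"
      unfolding pCons0_X[symmetric] by simp
    then show ?case using Jadd Jsm JX pCons.IH that by simp
  qed
  define k0 where "k0 = (LEAST k. \<exists>f\<in>J. f \<noteq> 0 \<and> degree f = k)"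
  have hnz: "h \<noteq> 0" using e_nz by (simp add: h_def)
  have "\<exists>f\<in>J. f \<noteq> 0 \<and> degree f = k0"
    unfolding k0_def by (rule LeastI[of _ "degree h"]) (use Jh hnz in blast)
  then obtain d0 where d0: "d0 \<in> J" "d0 \<noteq> 0" "degree d0 = k0" by blast
  have mind: "degree d0 \<le> degree f" if "f \<in> J" "f \<noteq> 0" for f
    unfolding d0(3) k0_def by (rule Least_le) (use that in blast)
  have d0dvd: "d0 dvd f" if fJ: "f \<in> J" for f
  proof -
    have "f mod d0 = f + (- (f div d0)) * d0" by (simp add: mod_div_mult_eq[symmetric] algebra_simps)
    moreover have "f + (- (f div d0)) * d0 \<in> J" using Jadd Jmul that d0(1) by blast
    ultimately have "f mod d0 \<in> J" by simp
    hence "f mod d0 = 0" using mind degree_mod_less[OF d0(2), of f] by fastforce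
    thus ?thesis by (simp add: mod_eq_0_iff_dvd)
  qed
  define d where "d = smult (inverse (lead_coeff d0)) d0"
  have lc: "lead_coeff d0 \<noteq> 0" using d0(2) by simp
  have dJ: "d \<in> J" unfolding d_def using Jsm d0(1) by blast
  have d0d: "d0 = smult (lead_coeff d0) d" using lc by (simp add: d_def)
  have ddvd: "d dvd f" if "f \<in> J" for f
  proof -
    have "d dvd smult (lead_coeff d0) d" by (rule dvd_smult) simp
    hence "d dvd d0" using d0d by simp
    thus ?thesis using d0dvd[OF that] dvd_trans by blast
  qed
  have dlc: "lead_coeff d = 1" using lc by (simp add: d_def)
  have "C = Code d"
  proof
    show "C \<subseteq> Code d"
    proof
      fix c assume c: "c \<in> C"
      have "Phi c \<in> J" unfolding J_def using c by (metis (mono_tags, lifting) mem_Collect_eq diff_self dvd_0_right)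
      thus "c \<in> Code d" using Cl[OF c] ddvd by (simp add: Code_def)
    qed
    show "Code d \<subseteq> C"
    proof
      fix c assume "c \<in> Code d"
      then have lc: "length c = n" and "d dvd Phi c" by (auto simp: Code_def)
      then obtain t where "Phi c = t * d" by (metis dvdE mult.commute)
      hence "Phi c \<in> J" using Jmul dJ by simp
      then obtain c' where c': "c' \<in> C" "h dvd Phi c - Phi c'" unfolding J_def by auto
      hence "c = c'" using Phi_inj lc Cl by blast
      thus "c \<in> C" using c' by simp
    qed
  qed
  moreover have "d dvd h" using ddvd Jh by blast
  ultimately show ?thesis using dlc by blast
qed

end



lemma irred_quad:
  fixes f :: "'a::field poly"
  assumes d: "degree f = 2" and nr: "\<And>x. poly f x \<noteq> 0"
  shows "irreducible f"
proof (rule irreducibleI)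
  show f0: "f \<noteq> 0" using d by auto
  show "\<not> is_unit f" using d is_unit_iff_degree[OF f0] by auto
  fix a b assume f: "f = a * b"
  then have a0: "a \<noteq> 0" and b0: "b \<noteq> 0" using d by auto
  have dd: "degree a + degree b = 2" using f d a0 b0 by (simp add: degree_mult_eq)
  show "is_unit a \<or> is_unit b"
  proof (rule ccontr)
    assume "\<not> (is_unit a \<or> is_unit b)"
    hence "degree a \<noteq> 0" "degree b \<noteq> 0" using is_unit_iff_degree a0 b0 by auto
    hence "degree a = 1" using dd by linarith
    then obtain u v where uv: "a = [:v, u:]" "u \<noteq> 0" by (rule degree1_coeffs)
    have "poly a (- v / u) = 0" using uv by (simp add: field_simps)
    hence "poly f (- v / u) = 0" using f by simp
    with nr show False by blast
  qed
qed

lemma quad_irred: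
  fixes g :: "'a::field"
  assumes g: "g \<noteq> 0" and two: "(2::'a) \<noteq> 0" and nsq: "\<not> (\<exists>z. z ^ 2 = (-1::'a))"
  shows "irreducible [:g ^ 2 / 2, g, 1:]"
proof (rule irred_quad)
  show "degree [:g ^ 2 / 2, g, 1:] = 2" by simp
  fix x
  show "poly [:g ^ 2 / 2, g, 1:] x \<noteq> 0"
  proof
    assume "poly [:g ^ 2 / 2, g, 1:] x = 0"
    hence "g ^ 2 / 2 + x * (g + x) = 0" by simp
    hence H: "g ^ 2 + 2 * g * x + 2 * x ^ 2 = 0" using two by (simp add: field_simps power2_eq_square)
    have "(2 * x + g) ^ 2 = 2 * (g ^ 2 + 2 * g * x + 2 * x ^ 2) - g ^ 2"
      by (simp add: algebra_simps power2_eq_square)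
    hence "(2 * x + g) ^ 2 = - (g ^ 2)" using H by simp
    hence "((2 * x + g) / g) ^ 2 = -1" using g by (simp add: power_divide)
    with nsq show False by blast
  qed
qed

lemma prod_quads:
  fixes g a0 :: "'a::field"
  assumes two: "(2::'a) \<noteq> 0" and "g ^ 4 + 4 * a0 = 0"
  shows "[:g ^ 2 / 2, g, 1:] * [:g ^ 2 / 2, - g, 1:] = monom 1 4 - [:a0:]"
proof -
  have "(4::'a) = 2 * 2" by simp
  hence four: "(4::'a) \<noteq> 0" using two by (metis mult_eq_0_iff)
  have a0: "a0 = - (g ^ 4 / 4)" using assms four by (simp add: field_simps eq_neg_iff_add_eq_0)
  show ?thesis
    apply (rule poly_eqI)
    using two by (simp add: coeff_pCons coeff_monom a0 power2_eq_square power4_eq_xxxx split: nat.split)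
qed




lemma irred_prime:
  fixes f a b :: "'a::field poly"
  assumes irr: "irreducible f" and dv: "f dvd a * b"
  shows "f dvd a \<or> f dvd b"
proof (cases "f dvd a")
  case True then show ?thesis by simp
next
  case False
  note na = False
  have f0: "f \<noteq> 0" using irr by (simp add: irreducible_def)
  define S where "S = {x * f + y * a | x y. True}"
  have fS: "f \<in> S" unfolding S_def by (rule CollectI, rule exI[of _ 1], rule exI[of _ 0]) simp
  have aS: "a \<in> S" unfolding S_def by (rule CollectI, rule exI[of _ 0], rule exI[of _ 1]) simp
  have Sdiff: "t - k * g \<in> S" if tS: "t \<in> S" and gS: "g \<in> S" for t g k
  proof -
    obtain x y where t: "t = x * f + y * a" using tS unfolding S_def by blast
    obtain x' y' where g: "g = x' * f + y' * a" using gS unfolding S_def by blast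
    have "t - k * g = (x - k * x') * f + (y - k * y') * a" by (simp add: t g algebra_simps)
    thus ?thesis unfolding S_def by blast
  qed
  define k0 where "k0 = (LEAST k. \<exists>g\<in>S. g \<noteq> 0 \<and> degree g = k)"
  have "\<exists>g\<in>S. g \<noteq> 0 \<and> degree g = k0"
    unfolding k0_def by (rule LeastI[of _ "degree f"]) (use fS f0 in blast)
  then obtain g where g: "g \<in> S" "g \<noteq> 0" "degree g = k0" by blast
  have ming: "degree g \<le> degree t" if "t \<in> S" "t \<noteq> 0" for t
    unfolding g(3) k0_def by (rule Least_le) (use that in blast)
  have gdvd: "g dvd t" if "t \<in> S" for t
  proof -
    have "t mod g = t - (t div g) * g" by (simp add: mod_div_mult_eq[symmetric] algebra_simps)
    moreover have "t - (t div g) * g \<in> S" using Sdiff that g(1) by blast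
    ultimately have "t mod g \<in> S" by simp
    hence "t mod g = 0" using ming degree_mod_less[OF g(2), of t] by fastforce
    thus ?thesis by (simp add: mod_eq_0_iff_dvd)
  qed
  obtain k where fk: "f = g * k" using gdvd[OF fS] by (auto elim: dvdE)
  have "is_unit g"
  proof (rule ccontr)
    assume "\<not> is_unit g"
    hence "is_unit k" using irreducibleD[OF irr fk] by auto
    hence "f dvd g" using fk by (metis dvd_mult_unit_iff dvd_refl)
    hence "f dvd a" using gdvd[OF aS] dvd_trans by blast
    with na show False by simp
  qed
  obtain x y where gxy: "g = x * f + y * a" using g(1) unfolding S_def by blast
  have "b * g = (x * b) * f + y * (a * b)" by (simp add: gxy algebra_simps)
  hence "f dvd b * g" using dv by (metis dvd_add dvd_mult dvd_triv_right)
  hence "f dvd b" using \<open>is_unit g\<close> by (simp add: dvd_mult_unit_iff)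
  then show ?thesis by simp
qed

lemma irred_prime_pow:
  fixes f a :: "'a::field poly"
  assumes irr: "irreducible f" and dv: "f dvd a ^ k"
  shows "f dvd a"
  using dv
proof (induction k)
  case 0 then show ?case using irr by (simp add: irreducible_def)
next
  case (Suc k) then show ?case using irred_prime[OF irr] by auto
qed

lemma monic_unit: "lead_coeff (d::'a::field poly) = 1 \<Longrightarrow> is_unit d \<Longrightarrow> d = 1"
  by (metis is_unit_iff_degree leading_coeff_0_iff one_neq_zero degree_0_id one_pCons)

lemma irred_assoc:
  fixes f q :: "'a::field poly"
  assumes irr: "irreducible f" and q: "irreducible q" and dv: "q dvd f"
  shows "f dvd q"
proof -
  obtain k where fk: "f = q * k" using dv by (auto elim: dvdE)
  have "\<not> is_unit q" using q by (simp add: irreducible_def)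
  hence "is_unit k" using irreducibleD[OF irr fk] by auto
  thus ?thesis using fk by (metis dvd_mult_unit_iff dvd_refl)
qed

lemma exists_irred_factor:
  fixes d :: "'a::field poly"
  assumes "d \<noteq> 0" "\<not> is_unit d"
  shows "\<exists>q. irreducible q \<and> q dvd d"
  using assms
proof (induction "degree d" arbitrary: d rule: less_induct)
  case less
  show ?case
  proof (cases "irreducible d")
    case True then show ?thesis using dvd_refl by blast
  next
    case False
    then obtain a b where ab: "d = a * b" "\<not> is_unit a" "\<not> is_unit b"
      using less.prems by (auto simp: irreducible_def)
    have a0: "a \<noteq> 0" and b0: "b \<noteq> 0" using ab less.prems by auto
    have "degree b \<noteq> 0" using ab(3) b0 is_unit_iff_degree by blast
    hence "degree a < degree d" using ab(1) a0 b0 by (simp add: degree_mult_eq)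
    then obtain q where "irreducible q" "q dvd a" using less.hyps a0 ab(2) by blast
    thus ?thesis using ab(1) by auto
  qed
qed

lemma divisors_two_irred:
  fixes f1 f2 :: "'a::field poly"
  assumes i1: "irreducible f1" and i2: "irreducible f2" and m1: "lead_coeff f1 = 1"
    and m2: "lead_coeff f2 = 1" and ne: "f1 \<noteq> f2"
  shows "lead_coeff d = 1 \<Longrightarrow> d dvd f1 ^ a * f2 ^ b \<Longrightarrow> \<exists>i j. i \<le> a \<and> j \<le> b \<and> d = f1 ^ i * f2 ^ j"
proof (induction "a + b" arbitrary: a b d rule: less_induct)
  case less
  note md = less.prems(1) and dv = less.prems(2)
  have d0: "d \<noteq> 0" using md by auto
  have f10: "f1 \<noteq> 0" and f20: "f2 \<noteq> 0" using i1 i2 by (auto simp: irreducible_def)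
  show ?case
  proof (cases "is_unit d")
    case True
    then have "d = 1" using monic_unit md by blast
    then show ?thesis by (intro exI[of _ 0]) simp
  next
    case False
    then obtain q where q: "irreducible q" "q dvd d" using exists_irred_factor d0 by blast
    have "q dvd f1 ^ a * f2 ^ b" using q dv dvd_trans by blast
    hence "q dvd f1 ^ a \<or> q dvd f2 ^ b" using irred_prime[OF q(1)] by blast
    then show ?thesis
    proof
      assume "q dvd f1 ^ a"
      hence a0: "a \<noteq> 0" using q(1) by (cases a) (auto simp: irreducible_def)
      have "q dvd f1" using irred_prime_pow[OF q(1)] \<open>q dvd f1 ^ a\<close> by blast
      hence "f1 dvd d" using irred_assoc[OF i1 q(1)] q(2) dvd_trans by blast
      then obtain d' where d': "d = f1 * d'" by (auto elim: dvdE)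
      have md': "lead_coeff d' = 1" using md m1 by (simp add: d' lead_coeff_mult)
      have eq: "f1 ^ a * f2 ^ b = f1 * (f1 ^ (a - 1) * f2 ^ b)" using a0
        by (metis mult.assoc power_eq_if)
      have "f1 * d' dvd f1 * (f1 ^ (a - 1) * f2 ^ b)" using dv unfolding eq d' .
      hence "d' dvd f1 ^ (a - 1) * f2 ^ b" using dvd_times_left_cancel_iff[OF f10] by blast
      then obtain i j where ij: "i \<le> a - 1" "j \<le> b" "d' = f1 ^ i * f2 ^ j"
        using less.hyps[of "a - 1" b d'] a0 md' by auto
      show ?thesis
        by (rule exI[of _ "Suc i"], rule exI[of _ j]) (use ij a0 d' in \<open>auto simp: mult.assoc\<close>)
    next
      assume "q dvd f2 ^ b"
      hence b0: "b \<noteq> 0" using q(1) by (cases b) (auto simp: irreducible_def)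
      have "q dvd f2" using irred_prime_pow[OF q(1)] \<open>q dvd f2 ^ b\<close> by blast
      hence "f2 dvd d" using irred_assoc[OF i2 q(1)] q(2) dvd_trans by blast
      then obtain d' where d': "d = f2 * d'" by (auto elim: dvdE)
      have md': "lead_coeff d' = 1" using md m2 by (simp add: d' lead_coeff_mult)
      have eq: "f1 ^ a * f2 ^ b = f2 * (f1 ^ a * f2 ^ (b - 1))" using b0
        by (metis mult.assoc mult.commute power_eq_if)
      have "f2 * d' dvd f2 * (f1 ^ a * f2 ^ (b - 1))" using dv unfolding eq d' .
      hence "d' dvd f1 ^ a * f2 ^ (b - 1)" using dvd_times_left_cancel_iff[OF f20] by blast
      then obtain i j where ij: "i \<le> a" "j \<le> b - 1" "d' = f1 ^ i * f2 ^ j"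
        using less.hyps[of a "b - 1" d'] b0 md' by auto
      show ?thesis
        by (rule exI[of _ i], rule exI[of _ "Suc j"]) (use ij b0 d' in \<open>auto simp: ac_simps\<close>)
    qed
  qed
qed

lemma emb_sum: "(D (sum f A) 0 :: 'a::comm_ring_1 dnum) = (\<Sum>x\<in>A. D (f x) 0)"
  by (rule dnum.expand) (simp add: re_sum du_sum)

lemma map_emb_mult: "map_poly emb (f * g) = map_poly emb f * map_poly (emb :: 'a::comm_ring_1 \<Rightarrow> _) g"
  by (rule poly_eqI) (simp add: coeff_mult coeff_map_poly zero_dnum_def emb_sum times_dnum_def)

lemma map_emb_one: "map_poly emb 1 = (1 :: 'a::comm_ring_1 dnum poly)"
  by (rule poly_eqI) (simp add: coeff_map_poly one_dnum_def zero_dnum_def coeff_1)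

lemma map_emb_power: "map_poly emb (f ^ k) = map_poly (emb :: 'a::comm_ring_1 \<Rightarrow> _) f ^ k"
  by (induction k) (simp_all add: map_emb_one map_emb_mult)

lemma map_emb_quad: "map_poly emb [:a, b, 1:] = [:emb a, emb b, (1 :: 'a::comm_ring_1 dnum):]"
  by (rule poly_eqI) (simp add: coeff_map_poly coeff_pCons zero_dnum_def one_dnum_def split: nat.split)




theorem theorem3p5:
  fixes p m s :: nat
    and \<alpha> \<beta> \<alpha>0 \<gamma> :: "'a::{finite,field}" and C :: "'a dnum list set"
  assumes "prime p" and "odd p" and "m > 0" and "s > 0"
    and "card (UNIV :: 'a set) = p ^ m" and "p ^ m mod 4 = 3"
    and "\<alpha> \<noteq> 0" and "\<not> (\<exists>y. y ^ 2 = \<alpha>)"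
    and "\<alpha>0 ^ (p ^ s) = \<alpha>"
    and "\<gamma> ^ 4 + 4 * \<alpha>0 = 0"
    and "\<beta> \<noteq> 0"
  shows "constacyclic_code (4 * p ^ s) (D \<alpha> \<beta>) C \<longleftrightarrow>
    (\<exists>i j. i \<le> 2 * p ^ s \<and> j \<le> 2 * p ^ s \<and>
       C = principal_code (4 * p ^ s) (D \<alpha> \<beta>)
             ([:emb (\<gamma> ^ 2 / 2), emb \<gamma>, 1:] ^ i *
              [:emb (\<gamma> ^ 2 / 2), emb (- \<gamma>), 1:] ^ j))"
proof -
  note pr = assms(1) and oddp = assms(2) and card = assms(5) and a0 = assms(7)
    and nsq = assms(8) and a0a = assms(9) and g4 = assms(10) and b0 = assms(11)
  define Np where "Np = p ^ s"
  have Np_pos: "Np > 0" using pr by (simp add: Np_def prime_gt_0_nat)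
  have oddNp: "odd Np" using oddp by (simp add: Np_def)
  have fin: "finite (UNIV :: 'a set)" by simp
  have cpos: "CHAR('a) > 0" using finite_imp_CHAR_pos[OF fin] .
  have cpr: "prime CHAR('a)" using prime_CHAR_semidom[OF cpos] .
  have "CHAR('a) dvd p ^ m" using CHAR_dvd_CARD[where 'a='a] card by simp
  hence "CHAR('a) dvd p" using cpr prime_dvd_power by blast
  hence chp: "CHAR('a) = p" using cpr pr primes_dvd_imp_eq by blast
  have two: "(2::'a) \<noteq> 0"
  proof
    assume "(2::'a) = 0"
    hence "of_nat 2 = (0::'a)" by simp
    hence "p dvd 2" using of_nat_eq_0_iff_char_dvd chp by metis
    hence "p \<le> 2" by (simp add: dvd_imp_le)
    moreover have "p \<ge> 2" using pr by (simp add: prime_ge_2_nat)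
    ultimately have "p = 2" by simp
    with oddp show False by simp
  qed
  have "(4::'a) = 2 * 2" by simp
  hence four: "(4::'a) \<noteq> 0" using two by (metis mult_eq_0_iff)
  have nsq0: "\<not> (\<exists>y. y ^ 2 = \<alpha>0)"
  proof
    assume "\<exists>y. y ^ 2 = \<alpha>0"
    then obtain y where y: "y ^ 2 = \<alpha>0" by blast
    have "(y ^ Np) ^ 2 = (y ^ 2) ^ Np" by (simp flip: power_mult add: mult.commute)
    hence "(y ^ Np) ^ 2 = \<alpha>" using a0a y by (simp add: Np_def)
    with nsq show False by blast
  qed
  have g0: "\<gamma> \<noteq> 0"
  proof
    assume "\<gamma> = 0"
    hence "\<alpha>0 = 0" using g4 four by simp
    hence "\<alpha> = 0" using a0a Np_pos unfolding Np_def by (metis power_0_left gr_implies_not0)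
    with a0 show False by simp
  qed
  have nsqm1: "\<not> (\<exists>z. z ^ 2 = (-1::'a))"
  proof
    assume "\<exists>z. z ^ 2 = (-1::'a)"
    then obtain z where z: "z ^ 2 = (-1::'a)" by blast
    have "\<alpha>0 = - (\<gamma> ^ 4 / 4)" using g4 four by (simp add: field_simps eq_neg_iff_add_eq_0)
    also have "\<dots> = z ^ 2 * (\<gamma> ^ 4 / 4)" using z by simp
    also have "\<dots> = (z * \<gamma> ^ 2 / 2) ^ 2"
      by (simp add: power_mult_distrib power_divide flip: power_mult)
    finally show False using nsq0 by metis
  qed
  define f1 where "f1 = [:\<gamma> ^ 2 / 2, \<gamma>, 1:]"
  define f2 where "f2 = [:\<gamma> ^ 2 / 2, - \<gamma>, 1:]"
  have i1: "irreducible f1" unfolding f1_def using quad_irred[OF g0 two nsqm1] .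
  have i2: "irreducible f2" unfolding f2_def using quad_irred[of "-\<gamma>", OF _ two nsqm1] g0 by simp
  have m1: "lead_coeff f1 = 1" and m2: "lead_coeff f2 = 1" by (simp_all add: f1_def f2_def)
  have ne: "f1 \<noteq> f2"
  proof
    assume "f1 = f2"
    hence "\<gamma> = - \<gamma>" by (simp add: f1_def f2_def)
    hence "2 * \<gamma> = 0" by simp
    with two g0 show False by simp
  qed
  have prod: "f1 * f2 = monom 1 4 - [:\<alpha>0:]"
    unfolding f1_def f2_def by (rule prod_quads[OF two g4])
  have cpoly: "prime CHAR('a poly)" using cpr by simp
  have frob: "(monom 1 4 - [:\<alpha>0:]) ^ Np = monom 1 (4 * Np) - [:\<alpha>:]"
  proof -
    have "(monom 1 4 + (- [:\<alpha>0:])) ^ Np = (monom 1 4) ^ Np + (- [:\<alpha>0:]) ^ Np"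
      by (rule freshmans_dream'[OF cpoly]) (simp add: Np_def chp)
    also have "(monom (1::'a) 4) ^ Np = monom 1 (4 * Np)" by (simp add: monom_power)
    also have "(- [:\<alpha>0:]) ^ Np = - [:\<alpha>:]"
      using oddNp a0a by (simp add: power_minus_odd const_pow Np_def)
    finally show ?thesis by (simp only: diff_conv_add_uminus)
  qed
  define n where "n = 4 * Np"
  have n_pos: "n > 0" using Np_pos by (simp add: n_def)
  have ccI: "cc n \<beta>" by unfold_locales (use n_pos b0 in auto)
  interpret cc n \<alpha> \<beta> by (rule ccI)
  have hfac: "h = f1 ^ (2 * Np) * f2 ^ (2 * Np)"
  proof -
    have "e = (f1 * f2) ^ Np" using cc.e_def[OF ccI, of \<alpha>] by (simp add: prod frob n_def)
    hence "h = ((f1 * f2) ^ Np) ^ 2" by (simp add: h_def)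
    also have "\<dots> = f1 ^ (2 * Np) * f2 ^ (2 * Np)"
      by (simp add: power_mult_distrib mult.commute flip: power_mult)
    finally show ?thesis .
  qed
  have memb: "map_poly emb (f1 ^ i * f2 ^ j) =
      [:emb (\<gamma> ^ 2 / 2), emb \<gamma>, 1:] ^ i * [:emb (\<gamma> ^ 2 / 2), emb (- \<gamma>), 1:] ^ j" for i j
    by (simp add: map_emb_mult map_emb_power map_emb_quad f1_def f2_def)
  show ?thesis
    unfolding Np_def[symmetric] n_def[symmetric]
  proof
    assume "constacyclic_code n (D \<alpha> \<beta>) C"
    then obtain d where d: "lead_coeff d = 1" "d dvd h" "C = Code d" using code_is_Code by blast
    then obtain i j where ij: "i \<le> 2 * Np" "j \<le> 2 * Np" "d = f1 ^ i * f2 ^ j"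
      using divisors_two_irred[OF i1 i2 m1 m2 ne, of d "2 * Np" "2 * Np"] hfac by auto
    have "C = principal_code n (D \<alpha> \<beta>) (map_poly emb d)" using principal_Code d by simp
    thus "\<exists>i j. i \<le> 2 * Np \<and> j \<le> 2 * Np \<and> C = principal_code n (D \<alpha> \<beta>)
        ([:emb (\<gamma> ^ 2 / 2), emb \<gamma>, 1:] ^ i * [:emb (\<gamma> ^ 2 / 2), emb (- \<gamma>), 1:] ^ j)"
      using ij memb by metis
  next
    assume "\<exists>i j. i \<le> 2 * Np \<and> j \<le> 2 * Np \<and> C = principal_code n (D \<alpha> \<beta>)
        ([:emb (\<gamma> ^ 2 / 2), emb \<gamma>, 1:] ^ i * [:emb (\<gamma> ^ 2 / 2), emb (- \<gamma>), 1:] ^ j)"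
    then obtain i j where ij: "i \<le> 2 * Np" "j \<le> 2 * Np" and
      C: "C = principal_code n (D \<alpha> \<beta>) (map_poly emb (f1 ^ i * f2 ^ j))"
      using memb by metis
    have dh: "f1 ^ i * f2 ^ j dvd h" unfolding hfac
      using ij by (intro mult_dvd_mono) (simp_all add: le_imp_power_dvd)
    show "constacyclic_code n (D \<alpha> \<beta>) C"
      unfolding C principal_Code[OF dh] by (rule Code_code[OF dh])
  qed
qed


end
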